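(* Let $r_1 \ge 2$ and $x_1 \ge 1$ be integers, let $d = x_1 + r_1 - 1$, and let $\mathbf{q} \in \mathbb{Z}^d$ be the vector whose first $x_1$ entries equal $r_1$ and whose last $r_1-1$ entries equal $1 + r_1 x_1$. Let $\Delta_{(1,\mathbf{q})} = \mathrm{conv}\{\mathbf{e}_1,\ldots,\mathbf{e}_d,-\mathbf{q}\} \subset \mathbb{R}^d$. For $\mathbf{t} = (t_1,\ldots,t_d) \in \mathbb{R}^d$ define \[ \lambda_k(\mathbf{t}) = \begin{cases} \sum_{j \ne k} t_j - x_1 r_1 t_k, & 1 \le k \le x_1,\\ \sum_{j\ne k} t_j - (r_1-1) t_k, & x_1+1 \le k \le d,\\ \sum_{j=1}^d t_j, & k = d+1,\end{cases} \] where the sums over $j$ range over $1 \le j \le d$. Then the inequalities $\lambda_k(\mathbf{t}) \le 1$ for $1 \le k \le d+1$ form an irredundant $\mathcal{H}$-description of $\Delta_{(1,\mathbf{q})}$.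
   Context: $\mathbf{e}_i$ is the $i$-th standard basis vector of $\mathbb{R}^d$. *)

theory Defs
  imports "HOL-Analysis.Analysis"
begin

text \<open>Coordinates are indexed by 1..d (d = x1 + r1 - 1).
  The j-th entry of q: r1 for 1 <= j <= x1, and 1 + r1*x1 for x1 < j <= d.\<close>
definition qvec :: "nat \<Rightarrow> nat \<Rightarrow> nat \<Rightarrow> real" where
  "qvec x1 r1 j = (if j \<le> x1 then real r1 else 1 + real r1 * real x1)"

definition lam :: "nat \<Rightarrow> nat \<Rightarrow> (nat \<Rightarrow> real) \<Rightarrow> nat \<Rightarrow> real" where
  "lam x1 r1 t k =
     (let d = x1 + r1 - 1 in
      if 1 \<le> k \<and> k \<le> x1 then (\<Sum>j\<in>{1..d}-{k}. t j) - real x1 * real r1 * t k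
      else if x1 + 1 \<le> k \<and> k \<le> d then (\<Sum>j\<in>{1..d}-{k}. t j) - (real r1 - 1) * t k
      else (\<Sum>j\<in>{1..d}. t j))"

end

theory Submission
  imports Defs
begin

definition cc :: "nat \<Rightarrow> nat \<Rightarrow> nat \<Rightarrow> real" where
  "cc x1 r1 k = (if k \<le> x1 then 1 + real x1 * real r1 else real r1)"

lemma cc_pos: "r1 \<ge> 2 \<Longrightarrow> cc x1 r1 k > 0"
  by (simp add: cc_def add_pos_nonneg)

lemma lam_in:
  assumes "r1 \<ge> 2" "k \<in> {1..x1+r1-1}"
  shows "lam x1 r1 t k = (\<Sum>j\<in>{1..x1+r1-1}. t j) - cc x1 r1 k * t k"
  using assms by (auto simp: lam_def cc_def Let_def sum_diff1 algebra_simps of_nat_diff)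

lemma lam_last: "r1 \<ge> 2 \<Longrightarrow> lam x1 r1 t (x1+r1-1+1) = (\<Sum>j\<in>{1..x1+r1-1}. t j)"
  by (simp add: lam_def Let_def)

lemma lam_lin: "lam x1 r1 (\<lambda>j. u * a j + v * b j) k = u * lam x1 r1 a k + v * lam x1 r1 b k"
  unfolding lam_def Let_def by (simp add: sum.distrib sum_distrib_left algebra_simps)

lemma qsum:
  assumes "r1 \<ge> 2"
  shows "(\<Sum>j\<in>{1..x1+r1-1}. qvec x1 r1 j) + 1 = real r1 * (1 + real r1 * real x1)"
proof -
  have U: "{1..x1+r1-1} = {1..x1} \<union> {x1+1..x1+r1-1}" using assms by auto
  have s1: "(\<Sum>j\<in>{1..x1}. qvec x1 r1 j) = real x1 * real r1"
    by (simp add: qvec_def)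
  have s2: "(\<Sum>j\<in>{x1+1..x1+r1-1}. qvec x1 r1 j) = (real r1 - 1) * (1 + real r1 * real x1)"
    using assms by (simp add: qvec_def of_nat_diff)
  have "(\<Sum>j\<in>{1..x1+r1-1}. qvec x1 r1 j) = (\<Sum>j\<in>{1..x1}. qvec x1 r1 j) + (\<Sum>j\<in>{x1+1..x1+r1-1}. qvec x1 r1 j)"
    unfolding U by (rule sum.union_disjoint) auto
  then show ?thesis using s1 s2 by (simp add: algebra_simps)
qed

lemma cq: "cc x1 r1 j * qvec x1 r1 j = real r1 * (1 + real r1 * real x1)"
  by (simp add: cc_def qvec_def algebra_simps)

theorem proposition2p1:
  fixes r1 x1 :: nat and idx :: "nat \<Rightarrow> 'n::finite"
  assumes "r1 \<ge> 2" and "x1 \<ge> 1"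
    and "bij_betw idx {1..x1 + r1 - 1} (UNIV :: 'n set)"
  defines "d \<equiv> x1 + r1 - 1"
  defines "Delta \<equiv> convex hull ((\<lambda>i. axis (idx i) (1::real)) ` {1..d}
                     \<union> {- (\<chi> j. qvec x1 r1 (inv_into {1..d} idx j))})"
  defines "H \<equiv> (\<lambda>K. {t :: real^'n. \<forall>k\<in>K. lam x1 r1 (\<lambda>j. t $ idx j) k \<le> 1})"
  shows "Delta = H {1..d+1} \<and> (\<forall>k\<in>{1..d+1}. H ({1..d+1} - {k}) \<noteq> Delta)"
proof -
  note r1 = assms(1)
  let ?D = "{1..d}"
  have inj: "inj_on idx ?D" and surj: "idx ` ?D = UNIV"
    using assms(3) unfolding d_def bij_betw_def by auto
  define qV :: "real^'n" where "qV = (\<chi> j. qvec x1 r1 (inv_into {1..d} idx j))"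
  define Q where "Q = (\<Sum>j\<in>?D. qvec x1 r1 j)"
  have Q1: "Q + 1 = real r1 * (1 + real r1 * real x1)"
    using qsum[OF r1] unfolding Q_def d_def .
  have Qpos: "Q \<ge> 0" unfolding Q_def by (rule sum_nonneg) (simp add: qvec_def)
  have qV: "qV $ idx j = qvec x1 r1 j" if "j \<in> ?D" for j
    using that inj by (simp add: qV_def inv_into_f_f)
  have ax: "axis (idx i) (1::real) $ idx j = (if j = i then 1 else 0)" if "i \<in> ?D" "j \<in> ?D" for i j
  proof -
    have "(idx j = idx i) = (j = i)" using that inj by (meson inj_on_eq_iff)
    then show ?thesis by (simp add: axis_def)
  qed
  have lamin: "lam x1 r1 t k = (\<Sum>j\<in>?D. t j) - cc x1 r1 k * t k" if "k \<in> ?D" for t k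
    using lam_in[OF r1, of k] that unfolding d_def by simp
  have lamlast: "lam x1 r1 t (d+1) = (\<Sum>j\<in>?D. t j)" for t
    using lam_last[OF r1] unfolding d_def by simp
  have cqD: "cc x1 r1 j * qvec x1 r1 j = Q + 1" for j
    using cq Q1 by simp
  have convH: "convex (H K)" for K
  proof (rule convexI)
    fix x y :: "real^'n" and u v :: real
    assume xH: "x \<in> H K" and yH: "y \<in> H K" and u: "0 \<le> u" and v: "0 \<le> v" and uv: "u + v = 1"
    have x: "\<forall>k\<in>K. lam x1 r1 (\<lambda>j. x $ idx j) k \<le> 1" using xH by (simp add: H_def)
    have y: "\<forall>k\<in>K. lam x1 r1 (\<lambda>j. y $ idx j) k \<le> 1" using yH by (simp add: H_def)
    have "lam x1 r1 (\<lambda>j. (u *\<^sub>R x + v *\<^sub>R y) $ idx j) k \<le> 1" if k: "k \<in> K" for k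
    proof -
      have "lam x1 r1 (\<lambda>j. (u *\<^sub>R x + v *\<^sub>R y) $ idx j) k
          = u * lam x1 r1 (\<lambda>j. x $ idx j) k + v * lam x1 r1 (\<lambda>j. y $ idx j) k"
        using lam_lin[where u=u and a="\<lambda>j. x $ idx j" and v=v and b="\<lambda>j. y $ idx j"] by simp
      also have "\<dots> \<le> u * 1 + v * 1"
        using x y k u v by (intro add_mono mult_left_mono) auto
      finally show ?thesis using uv by simp
    qed
    then show "u *\<^sub>R x + v *\<^sub>R y \<in> H K" by (simp add: H_def)
  qed
  have sub1: "Delta \<subseteq> H {1..d+1}"
    unfolding Delta_def
  proof (rule hull_minimal)
    show "(\<lambda>i. axis (idx i) 1) ` ?D \<union> {- (\<chi> j. qvec x1 r1 (inv_into {1..d} idx j))} \<subseteq> H {1..d + 1}"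
    proof (intro Un_least subsetI)
      fix t assume "t \<in> (\<lambda>i. axis (idx i) (1::real)) ` ?D"
      then obtain i where i: "i \<in> ?D" and t: "t = axis (idx i) 1" by auto
      have s: "(\<Sum>j\<in>?D. t $ idx j) = 1"
      proof -
        have "(\<Sum>j\<in>?D. t $ idx j) = (\<Sum>j\<in>?D. if j = i then 1 else 0)"
          using ax[OF i] unfolding t by (intro sum.cong) auto
        also have "\<dots> = 1" using i by simp
        finally show ?thesis .
      qed
      show "t \<in> H {1..d+1}" unfolding H_def
      proof (simp only: mem_Collect_eq, intro ballI)
        fix k assume k: "k \<in> {1..d+1}"
        show "lam x1 r1 (\<lambda>j. t $ idx j) k \<le> 1"
        proof (cases "k = d+1")
          case True then show ?thesis using lamlast s by simp
        next
          case False then have kD: "k \<in> ?D" using k by auto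
          show ?thesis using lamin[OF kD] s ax[OF i kD] cc_pos[OF r1, of x1 k] t by simp
        qed
      qed
    next
      fix t assume "t \<in> {- (\<chi> j. qvec x1 r1 (inv_into {1..d} idx j))}"
      then have t: "t = - qV" by (simp add: qV_def)
      have s: "(\<Sum>j\<in>?D. t $ idx j) = - Q"
        unfolding Q_def t by (simp add: qV sum_negf)
      show "t \<in> H {1..d+1}" unfolding H_def
      proof (simp only: mem_Collect_eq, intro ballI)
        fix k assume k: "k \<in> {1..d+1}"
        show "lam x1 r1 (\<lambda>j. t $ idx j) k \<le> 1"
        proof (cases "k = d+1")
          case True then show ?thesis using lamlast s Qpos by simp
        next
          case False then have kD: "k \<in> ?D" using k by auto
          show ?thesis using lamin[OF kD] s qV[OF kD] cqD[of k] t by simp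
        qed
      qed
    qed
  next
    show "convex (H {1..d+1})" by (rule convH)
  qed
  have sub2: "H {1..d+1} \<subseteq> Delta"
  proof
    fix t assume tH: "t \<in> H {1..d+1}"
    have le: "lam x1 r1 (\<lambda>j. t $ idx j) k \<le> 1" if "k \<in> {1..d+1}" for k
      using tH that by (simp add: H_def)
    define T where "T = (\<Sum>j\<in>?D. t $ idx j)"
    define b where "b = (1 - T) / (Q + 1)"
    define a where "a j = t $ idx j + b * qvec x1 r1 j" for j
    have Qp: "Q + 1 > 0" using Qpos by simp
    have T1: "T \<le> 1" using le[of "d+1"] lamlast T_def by simp
    have b0: "b \<ge> 0" unfolding b_def using T1 Qp by simp
    have a0: "a j \<ge> 0" if j: "j \<in> ?D" for j
    proof -
      have "cc x1 r1 j * a j = cc x1 r1 j * t $ idx j + b * (cc x1 r1 j * qvec x1 r1 j)"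
        by (simp add: a_def algebra_simps)
      also have "\<dots> = cc x1 r1 j * t $ idx j + (1 - T)" using cqD[of j] Qp by (simp add: b_def)
      also have "\<dots> = 1 - lam x1 r1 (\<lambda>j. t $ idx j) j" using lamin[OF j] T_def by simp
      finally have "cc x1 r1 j * a j \<ge> 0" using le[of j] j by simp
      then show ?thesis using cc_pos[OF r1, of x1 j] by (simp add: zero_le_mult_iff)
    qed
    define w where "w i = (if i \<le> d then a i else b)" for i
    define p where "p i = (if i \<le> d then axis (idx i) (1::real) else - qV)" for i
    have D1: "{1..d+1} = insert (d+1) ?D" by auto
    have sa: "(\<Sum>i\<in>?D. a i) = T + b * Q"
      by (simp add: a_def T_def Q_def sum.distrib sum_distrib_left)
    have w1: "(\<Sum>i\<in>{1..d+1}. w i) = 1"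
    proof -
      have "(\<Sum>i\<in>{1..d+1}. w i) = w (d+1) + (\<Sum>i\<in>?D. w i)" unfolding D1 by simp
      also have "(\<Sum>i\<in>?D. w i) = (\<Sum>i\<in>?D. a i)" by (rule sum.cong) (auto simp: w_def)
      also have "w (d+1) = b" by (simp add: w_def)
      finally have "(\<Sum>i\<in>{1..d+1}. w i) = T + b * (Q + 1)" using sa by (simp add: algebra_simps)
      then show ?thesis using Qp by (simp add: b_def)
    qed
    have comp: "t $ n = (\<Sum>i\<in>{1..d+1}. w i *\<^sub>R p i) $ n" for n
    proof -
      obtain j where j: "j \<in> ?D" "n = idx j" using surj by (metis UNIV_I imageE)
      have "(\<Sum>i\<in>{1..d+1}. w i *\<^sub>R p i) $ idx j = (\<Sum>i\<in>{1..d+1}. w i * (p i $ idx j))"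
        by simp
      also have "\<dots> = w (d+1) * (p (d+1) $ idx j) + (\<Sum>i\<in>?D. w i * (p i $ idx j))"
        unfolding D1 by simp
      also have "(\<Sum>i\<in>?D. w i * (p i $ idx j)) = (\<Sum>i\<in>?D. if i = j then a i else 0)"
        by (rule sum.cong) (auto simp: w_def p_def ax[OF _ j(1)])
      also have "\<dots> = a j" using j by simp
      finally show ?thesis using j qV[OF j(1)] by (simp add: w_def p_def a_def)
    qed
    have tsum: "t = (\<Sum>i\<in>{1..d+1}. w i *\<^sub>R p i)"
      using comp by (simp add: vec_eq_iff)
    have "(\<Sum>i\<in>{1..d+1}. w i *\<^sub>R p i) \<in> Delta"
      unfolding Delta_def
    proof (rule convex_sum[OF finite_atLeastAtMost convex_convex_hull w1])
      fix i assume i: "i \<in> {1..d+1}"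
      show "0 \<le> w i" using i a0 b0 by (simp add: w_def)
      show "p i \<in> convex hull ((\<lambda>i. axis (idx i) (1::real)) ` {1..d}
                     \<union> {- (\<chi> j. qvec x1 r1 (inv_into {1..d} idx j))})"
      proof (rule hull_inc)
        show "p i \<in> (\<lambda>i. axis (idx i) (1::real)) ` {1..d}
                     \<union> {- (\<chi> j. qvec x1 r1 (inv_into {1..d} idx j))}"
          using i by (auto simp: p_def qV_def)
      qed
    qed
    then show "t \<in> Delta" using tsum by simp
  qed
  have eq: "Delta = H {1..d+1}" using sub1 sub2 by auto
  have cc2: "cc x1 r1 k \<ge> 2" for k
  proof -
    have "real x1 * real r1 \<ge> 1 * 2" using assms(1,2) by (intro mult_mono) auto
    then show ?thesis using assms(1) by (auto simp: cc_def)
  qed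
  have Qbig: "Q > 1"
  proof -
    have "real r1 * real x1 \<ge> 2 * 1" using assms(1,2) by (intro mult_mono) auto
    then have "real r1 * (1 + real r1 * real x1) \<ge> 2 * (1 + 2)" using assms(1)
      by (intro mult_mono) auto
    then show ?thesis using Q1 by simp
  qed
  have nonred: "H ({1..d+1} - {k}) \<noteq> Delta" if k: "k \<in> {1..d+1}" for k
  proof (cases "k = d+1")
    case True
    have s: "(\<Sum>j\<in>?D. qV $ idx j) = Q" unfolding Q_def by (simp add: qV)
    have "qV \<in> H ({1..d+1} - {k})"
    proof -
      have "lam x1 r1 (\<lambda>j. qV $ idx j) m \<le> 1" if m: "m \<in> {1..d+1} - {k}" for m
      proof -
        have mD: "m \<in> ?D" using m True by auto
        show ?thesis using lamin[OF mD] s qV[OF mD] cqD[of m] by simp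
      qed
      then show ?thesis by (simp add: H_def)
    qed
    moreover have "qV \<notin> H {1..d+1}"
    proof -
      have gt: "lam x1 r1 (\<lambda>j. qV $ idx j) (d+1) > 1"
        using lamlast[of "\<lambda>j. qV $ idx j"] s Qbig by simp
      have mem: "d+1 \<in> {1..d+1}" by simp
      show ?thesis unfolding H_def mem_Collect_eq using gt mem by (meson not_le)
    qed
    ultimately show ?thesis using eq by auto
  next
    case False
    then have kD: "k \<in> ?D" using k by auto
    define t :: "real^'n" where "t = (-2) *\<^sub>R axis (idx k) 1"
    have tc: "t $ idx j = (if j = k then -2 else 0)" if "j \<in> ?D" for j
      using ax[OF kD that] by (simp add: t_def)
    have s: "(\<Sum>j\<in>?D. t $ idx j) = -2"
    proof -
      have "(\<Sum>j\<in>?D. t $ idx j) = (\<Sum>j\<in>?D. if j = k then -2 else 0)"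
        using tc by (intro sum.cong) auto
      also have "\<dots> = -2" using kD by simp
      finally show ?thesis .
    qed
    have "t \<in> H ({1..d+1} - {k})"
    proof -
      have "lam x1 r1 (\<lambda>j. t $ idx j) m \<le> 1" if m: "m \<in> {1..d+1} - {k}" for m
      proof (cases "m = d+1")
        case True then show ?thesis using lamlast s by simp
      next
        case False
        then have mD: "m \<in> ?D" using m by auto
        show ?thesis using lamin[OF mD] s tc[OF mD] m by simp
      qed
      then show ?thesis by (simp add: H_def)
    qed
    moreover have "t \<notin> H {1..d+1}"
    proof -
      have "lam x1 r1 (\<lambda>j. t $ idx j) k = -2 + 2 * cc x1 r1 k"
        using lamin[OF kD] s tc[OF kD] by simp
      then have "lam x1 r1 (\<lambda>j. t $ idx j) k > 1" using cc2[of k] by simp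
      then show ?thesis unfolding H_def mem_Collect_eq using k by (meson not_le)
    qed
    ultimately show ?thesis using eq by auto
  qed
  show ?thesis using eq nonred by blast
qed

end
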